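(* Consider a single agent with finite action set $A$, $|A|=m\ge 2$, and unknown utility $U:A\to[0,1]$, interacting with a principal over rounds; in each round $t$ the principal chooses a payment $P^t:A\to\mathbb{R}_+$, and the agent plays an action maximizing $U(a)+P^t(a)$, which the principal observes. Consider the principal's algorithm that, for each action $a\in A$, uses $\mathcal{O}(\log(1/\varepsilon))$ iterations of binary search to approximate to precision $\varepsilon$ the smallest value $P^*(a)\in[0,1]$ such that the agent plays $a$ when paid $P^*(a)$ for action $a$ and $0$ for all other actions (one round per binary-search query), and then outputs $\tilde U:=-P^*$. This algorithm $\varepsilon$-learns every such single-agent game using $\mathcal{O}(m\log(1/\varepsilon))$ rounds.
   Context: A principal $\varepsilon$-learns the game if it outputs $\tilde U:A\to\mathbb{R}$ such that there is a constant $W\in\mathbb{R}$ with $|U(a)+W-\tilde U(a)|\le\varepsilon$ for all $a\in A$. The principal initially knows only $A$ and that utilities lie in $[0,1]$. *)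

theory Defs
  imports Complex_Main
begin

definition pay :: "'a \<Rightarrow> real \<Rightarrow> 'a \<Rightarrow> real" where
  "pay a v = (\<lambda>b. if b = a then v else 0)"

text \<open>An agent response rule R t P gives the action played in round t under payment P.
  It is a valid (myopic, utility-maximizing, arbitrary tie-breaking) agent for
  utility U on action set A if it always plays a maximizer of U + P over A.\<close>
definition best_resp :: "'a set \<Rightarrow> ('a \<Rightarrow> real) \<Rightarrow> (nat \<Rightarrow> ('a \<Rightarrow> real) \<Rightarrow> 'a) \<Rightarrow> bool" where
  "best_resp A U R \<longleftrightarrow>
     (\<forall>t P. (\<forall>b. 0 \<le> P b) \<longrightarrow>
        R t P \<in> A \<and> (\<forall>b\<in>A. U b + P b \<le> U (R t P) + P (R t P)))"

definition eps_learns :: "'a set \<Rightarrow> ('a \<Rightarrow> real) \<Rightarrow> ('a \<Rightarrow> real) \<Rightarrow> real \<Rightarrow> bool" where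
  "eps_learns A U Ut \<epsilon> \<longleftrightarrow> (\<exists>W::real. \<forall>a\<in>A. \<bar>U a + W - Ut a\<bar> \<le> \<epsilon>)"

fun bsearch :: "(nat \<Rightarrow> ('a \<Rightarrow> real) \<Rightarrow> 'a) \<Rightarrow> 'a \<Rightarrow> nat \<Rightarrow> nat \<Rightarrow> real \<Rightarrow> real \<Rightarrow> real \<times> nat" where
  "bsearch R a 0 t lo hi = (hi, t)"
| "bsearch R a (Suc k) t lo hi =
     (let mid = (lo + hi) / 2 in
      if R t (pay a mid) = a then bsearch R a k (Suc t) lo mid
      else bsearch R a k (Suc t) mid hi)"

fun learn_list :: "(nat \<Rightarrow> ('a \<Rightarrow> real) \<Rightarrow> 'a) \<Rightarrow> nat \<Rightarrow> 'a list \<Rightarrow> nat \<Rightarrow> ('a \<Rightarrow> real) \<times> nat" where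
  "learn_list R k [] t = ((\<lambda>_. 0), t)"
| "learn_list R k (a # as) t =
     (let (h, t1) = bsearch R a k t 0 1;
          (f, t2) = learn_list R k as t1
      in (f(a := - h), t2))"

definition iters :: "real \<Rightarrow> nat" where
  "iters \<epsilon> = nat \<lceil>log 2 (1 / \<epsilon>)\<rceil>"

definition learn_alg :: "(nat \<Rightarrow> ('a \<Rightarrow> real) \<Rightarrow> 'a) \<Rightarrow> 'a list \<Rightarrow> real \<Rightarrow> ('a \<Rightarrow> real) \<times> nat" where
  "learn_alg R acts \<epsilon> = learn_list R (iters \<epsilon>) acts 0"

end

theory Submission
  imports Defs
begin

lemma bsearch_spec:
  assumes br: "best_resp A U R" and aA: "a \<in> A"
    and Mub: "\<forall>b\<in>A. U b \<le> M" and Mw: "bm \<in> A" "U bm = M"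
  shows "0 \<le> lo \<Longrightarrow> lo \<le> M - U a \<Longrightarrow> M - U a \<le> hi \<Longrightarrow>
    M - U a \<le> fst (bsearch R a k t lo hi) \<and>
    fst (bsearch R a k t lo hi) \<le> M - U a + (hi - lo) / 2 ^ k \<and>
    snd (bsearch R a k t lo hi) = t + k"
proof (induction k arbitrary: t lo hi)
  case 0
  then show ?case by simp
next
  case (Suc k)
  define mid where "mid = (lo + hi) / 2"
  have P: "\<forall>b. 0 \<le> pay a mid b" using Suc.prems by (auto simp: pay_def mid_def)
  have r: "R t (pay a mid) \<in> A \<and> (\<forall>b\<in>A. U b + pay a mid b \<le> U (R t (pay a mid)) + pay a mid (R t (pay a mid)))"
    using br P unfolding best_resp_def by blast
  show ?case
  proof (cases "R t (pay a mid) = a")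
    case True
    have "M - U a \<le> mid"
    proof (cases "bm = a")
      case True then show ?thesis using Mw Suc.prems by (auto simp: mid_def)
    next
      case False
      then show ?thesis using r Mw \<open>R t (pay a mid) = a\<close> by (force simp: pay_def)
    qed
    then have IH: "M - U a \<le> fst (bsearch R a k (Suc t) lo mid) \<and>
      fst (bsearch R a k (Suc t) lo mid) \<le> M - U a + (mid - lo) / 2 ^ k \<and>
      snd (bsearch R a k (Suc t) lo mid) = Suc t + k"
      using Suc by blast
    have e: "(mid - lo) / 2 ^ k = (hi - lo) / 2 ^ Suc k" by (simp add: mid_def field_simps)
    show ?thesis using True IH e by (simp add: Let_def mid_def[symmetric])
  next
    case False
    have "U a + mid \<le> M" using r False Mub aA by (force simp: pay_def)
    then have "0 \<le> mid" "mid \<le> M - U a" using Suc.prems unfolding mid_def by (auto simp del: divide_le_eq_numeral1 le_divide_eq_numeral1 simp add: add_nonneg_nonneg)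
    then have IH: "M - U a \<le> fst (bsearch R a k (Suc t) mid hi) \<and>
      fst (bsearch R a k (Suc t) mid hi) \<le> M - U a + (hi - mid) / 2 ^ k \<and>
      snd (bsearch R a k (Suc t) mid hi) = Suc t + k"
      using Suc.IH[of mid hi "Suc t"] Suc.prems by simp
    have e: "(hi - mid) / 2 ^ k = (hi - lo) / 2 ^ Suc k" by (simp add: mid_def field_simps)
    show ?thesis using False IH e by (simp add: Let_def mid_def[symmetric])
  qed
qed

lemma learn_spec:
  assumes br: "best_resp A U R"
    and Mub: "\<forall>b\<in>A. U b \<le> M" and Mw: "bm \<in> A" "U bm = M" and U1: "\<forall>b\<in>A. 0 \<le> M - U b \<and> M - U b \<le> 1"
  shows "set as \<subseteq> A \<Longrightarrow> (\<forall>a\<in>set as. M - U a \<le> - fst (learn_list R k as t) a \<and>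
     - fst (learn_list R k as t) a \<le> M - U a + 1 / 2 ^ k) \<and>
     snd (learn_list R k as t) = t + length as * k"
proof (induction as arbitrary: t)
  case Nil
  then show ?case by simp
next
  case (Cons a as)
  obtain h t1 where ht: "bsearch R a k t 0 1 = (h, t1)" by fastforce
  obtain f t2 where ft: "learn_list R k as t1 = (f, t2)" by fastforce
  have aA: "a \<in> A" using Cons by auto
  have B: "M - U a \<le> h \<and> h \<le> M - U a + 1 / 2 ^ k \<and> t1 = t + k"
    using bsearch_spec[OF br aA Mub Mw, of 0 "1" k t] U1 aA ht by auto
  have I: "(\<forall>a\<in>set as. M - U a \<le> - f a \<and> - f a \<le> M - U a + 1 / 2 ^ k) \<and> t2 = t1 + length as * k"
    using Cons.IH[of t1] Cons.prems aA ft by auto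
  show ?case using B I ht ft by auto
qed

lemma iters_bound:
  assumes "0 < e" "e \<le> 1/2"
  shows "1 / 2 ^ iters e \<le> e" and "real (iters e) \<le> 2 * log 2 (1/e)"
proof -
  have "2 \<le> 1/e" using assms by (simp add: field_simps)
  then have l1: "1 \<le> log 2 (1/e)" using assms by (simp add: le_log_iff)
  have k: "real (iters e) = real_of_int \<lceil>log 2 (1/e)\<rceil>" unfolding iters_def using l1 by simp
  have "log 2 (1/e) \<le> real (iters e)" using k by linarith
  then have "2 powr log 2 (1/e) \<le> 2 powr real (iters e)" by simp
  then have "1/e \<le> 2 ^ iters e" using assms by (simp add: powr_realpow)
  then show "1 / 2 ^ iters e \<le> e" using assms by (simp add: field_simps)
  show "real (iters e) \<le> 2 * log 2 (1/e)" using k l1 by linarith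
qed

theorem theorem4p1:
  "\<exists>C::real. \<forall>(acts :: 'a list) (U :: 'a \<Rightarrow> real) R (\<epsilon>::real).
     distinct acts \<and> length acts \<ge> 2 \<and> (\<forall>a\<in>set acts. 0 \<le> U a \<and> U a \<le> 1) \<and>
     best_resp (set acts) U R \<and> 0 < \<epsilon> \<and> \<epsilon> \<le> 1/2 \<longrightarrow>
       eps_learns (set acts) U (fst (learn_alg R acts \<epsilon>)) \<epsilon> \<and>
       real (snd (learn_alg R acts \<epsilon>)) \<le> C * real (length acts) * log 2 (1 / \<epsilon>)"
proof (intro exI[of _ 2] allI impI)
  fix acts :: "'a list" and U :: "'a \<Rightarrow> real" and R and e :: real
  assume H: "distinct acts \<and> length acts \<ge> 2 \<and> (\<forall>a\<in>set acts. 0 \<le> U a \<and> U a \<le> 1) \<and>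
     best_resp (set acts) U R \<and> 0 < e \<and> e \<le> 1/2"
  define A where "A = set acts"
  define M where "M = Max (U ` A)"
  have ne: "A \<noteq> {}" using H A_def by auto
  have fin: "finite A" by (simp add: A_def)
  have Mub: "\<forall>b\<in>A. U b \<le> M" using fin M_def by simp
  have "M \<in> U ` A" using fin ne M_def by simp
  then obtain bm where Mw: "bm \<in> A" "U bm = M" by auto
  have U1: "\<forall>b\<in>A. 0 \<le> M - U b \<and> M - U b \<le> 1" 
  proof
    fix b assume b: "b \<in> A"
    have "U b \<le> M" "0 \<le> U b" "M \<le> 1" using b Mub Mw H A_def by auto
    then show "0 \<le> M - U b \<and> M - U b \<le> 1" by simp
  qed
  have L: "(\<forall>a\<in>set acts. M - U a \<le> - fst (learn_list R (iters e) acts 0) a \<and>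
     - fst (learn_list R (iters e) acts 0) a \<le> M - U a + 1 / 2 ^ (iters e)) \<and>
     snd (learn_list R (iters e) acts 0) = 0 + length acts * iters e"
    using learn_spec[OF _ Mub Mw U1, of R acts "iters e" 0] H A_def by auto
  have ib: "1 / 2 ^ iters e \<le> e" "real (iters e) \<le> 2 * log 2 (1/e)" using iters_bound H by auto
  show "eps_learns (set acts) U (fst (learn_alg R acts e)) e \<and>
       real (snd (learn_alg R acts e)) \<le> 2 * real (length acts) * log 2 (1 / e)"
  proof
    show "eps_learns (set acts) U (fst (learn_alg R acts e)) e"
      unfolding eps_learns_def learn_alg_def
    proof (intro exI[of _ "-M"] ballI)
      fix a assume "a \<in> set acts"
      then show "\<bar>U a + - M - fst (learn_list R (iters e) acts 0) a\<bar> \<le> e"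
        using L ib by fastforce
    qed
    have "real (length acts * iters e) = real (length acts) * real (iters e)" by simp
    also have "\<dots> \<le> real (length acts) * (2 * log 2 (1/e))" using ib by (intro mult_left_mono) auto
    finally show "real (snd (learn_alg R acts e)) \<le> 2 * real (length acts) * log 2 (1 / e)"
      using L unfolding learn_alg_def by simp
  qed
qed

end
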